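(* Let $c\in[0,1)$ and $b=\tfrac12-c$. For any $\varepsilon>0$ and any $C>1$ there exist $0<\delta'<C\delta'<\delta<\tfrac12$ such that $\dim_H\mathcal B(\delta,\delta')<\varepsilon$.
   Context: $\mathbb T=\mathbb R/\mathbb Z$, $Tx=2x\bmod1$, $d$ the usual distance, $B(b,r)$ the open ball. Given $\tfrac12>\delta>\delta'>0$, a positive integer $n$ is a $(\delta,\delta')$-good time of $x\in\mathbb T$ if $d(T^nx,b)<\delta'$ and $b\notin T^j(J)$ for each $0\le j<n$, where $J$ is the connected component of $T^{-n}(B(b,\delta))$ containing $x$. $\mathcal B(\delta,\delta')=\{x\in\mathbb T: b\in\omega(x)$ but $x$ has no $(\delta,\delta')$-good time$\}$, where $\omega(x)$ is the $\omega$-limit set of $x$ under $T$. *)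

theory Defs
  imports "HOL-Analysis.Analysis"
begin

text \<open>The circle T = R/Z is represented by real numbers (representatives; points of T
  are reals modulo 1). The usual distance on T is the distance to the nearest integer
  of the difference.\<close>

definition circ_dist :: "real \<Rightarrow> real \<Rightarrow> real" where
  "circ_dist x y = min (frac (x - y)) (1 - frac (x - y))"

definition dbl :: "real \<Rightarrow> real" where
  "dbl x = frac (2 * x)"

definition omega_limit :: "real \<Rightarrow> real set" where
  "omega_limit x = {z \<in> {0..<1}. \<forall>e>0. \<forall>N. \<exists>n\<ge>N. circ_dist ((dbl ^^ n) x) z < e}"

definition preimage_ball :: "real \<Rightarrow> real \<Rightarrow> nat \<Rightarrow> real set" where
  "preimage_ball b \<delta> n = {y. circ_dist ((dbl ^^ n) y) b < \<delta>}"

text \<open>(delta, delta')-good time. J is the connected component of the (lifted)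
  preimage containing x; b not in T^j(J) means no point of J is mapped by T^j to b mod 1.\<close>
definition good_time :: "real \<Rightarrow> real \<Rightarrow> real \<Rightarrow> real \<Rightarrow> nat \<Rightarrow> bool" where
  "good_time b \<delta> \<delta>' x n \<longleftrightarrow> n > 0 \<and> circ_dist ((dbl ^^ n) x) b < \<delta>' \<and>
     (\<forall>j<n. \<forall>y \<in> connected_component_set (preimage_ball b \<delta> n) x.
        circ_dist ((dbl ^^ j) y) b \<noteq> 0)"

definition bad_set :: "real \<Rightarrow> real \<Rightarrow> real \<Rightarrow> real set" where
  "bad_set b \<delta> \<delta>' = {x \<in> {0..<1}. frac b \<in> omega_limit x \<and> \<not> (\<exists>n. good_time b \<delta> \<delta>' x n)}"

definition hausdorff_pre :: "real \<Rightarrow> real \<Rightarrow> 'a::metric_space set \<Rightarrow> ennreal" where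
  "hausdorff_pre s d A = (INF U \<in> {U :: nat \<Rightarrow> 'a set. A \<subseteq> (\<Union>i. U i) \<and>
       (\<forall>i. bounded (U i) \<and> diameter (U i) \<le> d)}. (\<Sum>i. ennreal (diameter (U i) powr s)))"

definition hausdorff_measure :: "real \<Rightarrow> 'a::metric_space set \<Rightarrow> ennreal" where
  "hausdorff_measure s A = (SUP d \<in> {0<..}. hausdorff_pre s d A)"

definition hausdorff_dim :: "'a::metric_space set \<Rightarrow> ereal" where
  "hausdorff_dim A = Inf {ereal s | s. s > 0 \<and> hausdorff_measure s A = 0}"

end

theory Submission imports Defs begin

lemma cd_lt: "circ_dist u v < d \<longleftrightarrow> (\<exists>k::int. \<bar>u - v - of_int k\<bar> < d)"
proof
  assume h: "circ_dist u v < d"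
  define w where "w = u - v"
  have fw: "frac w = w - of_int (floor w)" by (simp add: frac_def)
  show "\<exists>k::int. \<bar>u - v - of_int k\<bar> < d"
  proof (cases "frac w < d")
    case True
    then show ?thesis using fw frac_ge_0[of w] by (intro exI[of _ "floor w"]) (simp add: w_def)
  next
    case False
    then have "1 - frac w < d" using h by (simp add: circ_dist_def w_def min_def split: if_splits)
    then show ?thesis using fw frac_lt_1[of w]
      by (intro exI[of _ "floor w + 1"]) (simp add: w_def)
  qed
next
  assume "\<exists>k::int. \<bar>u - v - of_int k\<bar> < d"
  then obtain k::int where k: "\<bar>u - v - of_int k\<bar> < d" by blast
  define w where "w = u - v"
  have fw: "frac w = w - of_int (floor w)" by (simp add: frac_def)
  show "circ_dist u v < d"
  proof (cases "d > 1/2")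
    case True
    have "circ_dist u v \<le> 1/2" by (simp add: circ_dist_def min_def)
    then show ?thesis using True by linarith
  next
    case dle: False
  show "circ_dist u v < d"
  proof (cases "of_int k \<le> w")
    case True
    then have "k \<le> floor w" by (simp add: le_floor_iff)
    then have "frac w < d" using fw k True unfolding w_def by linarith
    then show ?thesis by (simp add: circ_dist_def w_def)
  next
    case False
    then have "floor w < k" by (meson floor_less_iff not_le)
    moreover have "k - 1 \<le> floor w" using k False dle unfolding w_def
      by (simp add: le_floor_iff)
    ultimately have "floor w = k - 1" by simp
    then have "1 - frac w < d" using fw k False unfolding w_def by simp
    then show ?thesis by (simp add: circ_dist_def w_def)
  qed
  qed
qed

lemma cd_zero: "circ_dist u v = 0 \<Longrightarrow> \<exists>k::int. u - v = of_int k"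
proof -
  assume "circ_dist u v = 0"
  moreover have "1 - frac (u - v) > 0" using frac_lt_1[of "u-v"] by simp
  ultimately have "frac (u - v) = 0" by (simp add: circ_dist_def min_def split: if_splits)
  then have "u - v \<in> \<int>" by simp
  then show ?thesis by (metis Ints_cases)
qed

lemma dbl_pow: "\<exists>m::int. (dbl ^^ n) x = 2^n * x - of_int m"
proof (induction n)
  case 0
  then show ?case by (intro exI[of _ 0]) simp
next
  case (Suc n)
  then obtain m::int where m: "(dbl ^^ n) x = 2^n * x - of_int m" by blast
  have "(dbl ^^ Suc n) x = frac (2 * (2^n * x - of_int m))" by (simp add: m dbl_def)
  also have "\<dots> = 2 * (2^n * x - of_int m) - of_int (floor (2 * (2^n * x - of_int m)))"
    by (simp add: frac_def)
  finally show ?case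
    by (intro exI[of _ "2*m + floor (2 * (2^n * x - of_int m))"]) (simp add: algebra_simps)
qed

lemma cd_shift: "circ_dist (a - of_int m) v < d \<longleftrightarrow> (\<exists>k::int. \<bar>a - v - of_int k\<bar> < d)"
proof -
  have "(\<exists>k::int. \<bar>a - of_int m - v - of_int k\<bar> < d) \<longleftrightarrow> (\<exists>k::int. \<bar>a - v - of_int k\<bar> < d)"
  proof
    assume "\<exists>k::int. \<bar>a - of_int m - v - of_int k\<bar> < d"
    then obtain k::int where "\<bar>a - of_int m - v - of_int k\<bar> < d" by blast
    then show "\<exists>k::int. \<bar>a - v - of_int k\<bar> < d"
      by (intro exI[of _ "k + m"]) (simp add: algebra_simps)
  next
    assume "\<exists>k::int. \<bar>a - v - of_int k\<bar> < d"
    then obtain k::int where "\<bar>a - v - of_int k\<bar> < d" by blast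
    then show "\<exists>k::int. \<bar>a - of_int m - v - of_int k\<bar> < d"
      by (intro exI[of _ "k - m"]) (simp add: algebra_simps)
  qed
  then show ?thesis by (simp add: cd_lt)
qed

lemma cd_dbl_lt: "circ_dist ((dbl ^^ n) x) v < d \<longleftrightarrow> (\<exists>k::int. \<bar>2^n * x - v - of_int k\<bar> < d)"
  using dbl_pow[of n x] cd_shift by metis

lemma cd_dbl_zero: "circ_dist ((dbl ^^ n) x) v = 0 \<Longrightarrow> \<exists>k::int. 2^n * x - v = of_int k"
proof -
  assume "circ_dist ((dbl ^^ n) x) v = 0"
  moreover obtain m::int where m: "(dbl ^^ n) x = 2^n * x - of_int m" using dbl_pow by blast
  ultimately obtain k::int where "2^n * x - of_int m - v = of_int k" using cd_zero by metis
  then show ?thesis by (intro exI[of _ "k + m"]) (simp add: algebra_simps)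
qed


lemma preimage_ball_eq: "preimage_ball b d n = {y. \<exists>k::int. \<bar>2^n * y - b - of_int k\<bar> < d}"
  by (simp add: preimage_ball_def cd_dbl_lt)

lemma comp_sub:
  assumes d: "0 < d" "d \<le> 1/2" and xk: "\<bar>2^n * x - b - of_int k\<bar> < d"
    and y: "y \<in> connected_component_set (preimage_ball b d n) x"
  shows "\<bar>2^n * y - b - of_int k\<bar> < d"
proof (rule ccontr)
  define S where "S = preimage_ball b d n"
  define Cc where "Cc = connected_component_set S x"
  have conn: "connected Cc" unfolding Cc_def by simp
  have sub: "Cc \<subseteq> S" unfolding Cc_def by (rule connected_component_subset)
  have xS: "x \<in> S" using xk by (auto simp: S_def preimage_ball_eq)
  have xC: "x \<in> Cc" using xS by (simp add: Cc_def)
  have yC: "y \<in> Cc" using y by (simp add: Cc_def S_def)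
  have iv: "is_interval Cc" using conn by (simp add: is_interval_connected_1)
  have p2: "(2::real)^n > 0" by simp
  assume "\<not> \<bar>2^n * y - b - of_int k\<bar> < d"
  then consider "2^n * y - b - of_int k \<ge> d" | "2^n * y - b - of_int k \<le> - d" by linarith
  then show False
  proof cases
    case 1
    define e where "e = (b + of_int k + d) / 2^n"
    have "x \<le> e" "e \<le> y" using 1 xk p2 by (auto simp: e_def field_simps abs_less_iff)
    then have "e \<in> Cc" using iv xC yC unfolding is_interval_1 by blast
    then have "e \<in> S" using sub by blast
    then obtain k'::int where "\<bar>2^n * e - b - of_int k'\<bar> < d" by (auto simp: S_def preimage_ball_eq)
    then have "\<bar>of_int (k - k') + d\<bar> < d" using p2 by (simp add: e_def)
    then have "real_of_int (k - k') < 0" "real_of_int (k - k') > -1" using d by (auto simp: abs_less_iff)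
    then have "k - k' < 0" "k - k' > -1" by linarith+
    then show False by linarith
  next
    case 2
    define e where "e = (b + of_int k - d) / 2^n"
    have "y \<le> e" "e \<le> x" using 2 xk p2 by (auto simp: e_def field_simps abs_less_iff)
    then have "e \<in> Cc" using iv xC yC unfolding is_interval_1 by blast
    then have "e \<in> S" using sub by blast
    then obtain k'::int where "\<bar>2^n * e - b - of_int k'\<bar> < d" by (auto simp: S_def preimage_ball_eq)
    then have "\<bar>of_int (k - k') - d\<bar> < d" using p2 by (simp add: e_def)
    then have "real_of_int (k - k') > 0" "real_of_int (k - k') < 1" using d by (auto simp: abs_less_iff)
    then have "k - k' > 0" "k - k' < 1" by linarith+
    then show False by linarith
  qed
qed

inductive reach :: "real \<Rightarrow> real \<Rightarrow> nat \<Rightarrow> int \<Rightarrow> bool" for b d where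
  base: "-1 \<le> i \<Longrightarrow> i \<le> 2 \<Longrightarrow> reach b d 0 i"
| step: "reach b d j i \<Longrightarrow> 1 \<le> m \<Longrightarrow> \<bar>2^m * b - b - of_int (round (2^m * b - b))\<bar> < d
         \<Longrightarrow> reach b d (j + m) (2^m * i + round (2^m * b - b))"


lemma key:
  assumes d: "0 < d'" "d' < d" "d \<le> 1/2"
    and b: "\<bar>b\<bar> \<le> 1/2"
    and H: "\<And>m c. 1 \<le> m \<Longrightarrow> \<bar>2^m * b - b - of_int c\<bar> < d \<Longrightarrow> d' + \<bar>2^m * b - b - of_int c\<bar> \<le> 2^m * d'"
    and x: "0 \<le> x" "x < 1" and nogood: "\<And>n. \<not> good_time b d d' x n"
  shows "1 \<le> n \<Longrightarrow> \<bar>2^n * x - b - of_int k\<bar> < d' \<Longrightarrow> \<exists>k'. reach b d n k' \<and> \<bar>2^n * x - b - of_int k'\<bar> < d'"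
proof (induction n arbitrary: k rule: less_induct)
  case (less n)
  have "circ_dist ((dbl ^^ n) x) b < d'" using less.prems cd_dbl_lt by blast
  then obtain j y where j: "j < n" and y: "y \<in> connected_component_set (preimage_ball b d n) x"
    and z: "circ_dist ((dbl ^^ j) y) b = 0"
    using nogood[of n] less.prems unfolding good_time_def by auto
  obtain i::int where i: "2^j * y - b = of_int i" using cd_dbl_zero[OF z] by blast
  have yk: "\<bar>2^n * y - b - of_int k\<bar> < d" using comp_sub[OF _ d(3) _ y, of k] d less.prems by auto
  define m where "m = n - j"
  have n: "n = j + m" and m1: "1 \<le> m" using j by (auto simp: m_def)
  have pn: "(2::real)^n = 2^m * 2^j" by (simp add: n power_add)
  define c where "c = k - 2^m * i"
  have "2^n * y = 2^m * (2^j * y)" using pn by simp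
  also have "2^j * y = b + of_int i" using i by simp
  finally have yy: "2^n * y = 2^m * (b + of_int i)" .
  have cb: "\<bar>2^m * b - b - of_int c\<bar> < d" using yk yy by (simp add: c_def algebra_simps)
  have cr: "round (2^m * b - b) = c" using cb d by (intro round_unique') auto
  have Hm: "d' + \<bar>2^m * b - b - of_int c\<bar> \<le> 2^m * d'" using H[OF m1 cb] .
  have eq: "2^m * (2^j * x - b - of_int i) = (2^n * x - b - of_int k) - (2^m * b - b - of_int c)"
    using pn by (simp add: c_def algebra_simps)
  have "2^m * \<bar>2^j * x - b - of_int i\<bar> < 2^m * d'"
  proof -
    have "2^m * \<bar>2^j * x - b - of_int i\<bar> = \<bar>2^m * (2^j * x - b - of_int i)\<bar>" by (simp add: abs_mult)
    also have "\<dots> \<le> \<bar>2^n * x - b - of_int k\<bar> + \<bar>2^m * b - b - of_int c\<bar>" unfolding eq by linarith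
    also have "\<dots> < d' + \<bar>2^m * b - b - of_int c\<bar>" using less.prems by simp
    finally show ?thesis using Hm by linarith
  qed
  then have ji: "\<bar>2^j * x - b - of_int i\<bar> < d'" by simp
  have ri: "reach b d j i"
  proof (cases "j = 0")
    case True
    then have "\<bar>x - b - of_int i\<bar> < d'" using ji by simp
    then have "real_of_int i > -3/2" "real_of_int i < 5/2" using x b d by (auto simp: abs_less_iff)
    then have "-1 \<le> i" "i \<le> 2" by linarith+
    then show ?thesis using True by (simp add: reach.base)
  next
    case False
    then obtain i' where ri': "reach b d j i'" and i': "\<bar>2^j * x - b - of_int i'\<bar> < d'"
      using less.IH[OF j _ ji] by auto
    have "\<bar>real_of_int i - of_int i'\<bar> < 1" using ji i' d by (auto simp: abs_less_iff)
    then have "i = i'" by linarith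
    then show ?thesis using ri' by simp
  qed
  have "reach b d (j + m) (2^m * i + round (2^m * b - b))"
    by (rule reach.step[OF ri m1]) (use cb cr in simp)
  moreover have "2^m * i + round (2^m * b - b) = k" by (simp add: cr c_def)
  ultimately show ?case using less.prems n by auto
qed


lemma geo_tail: "0 \<le> (q::real) \<Longrightarrow> q < 1 \<Longrightarrow> (\<Sum>i=M..n. q^i) \<le> q^M / (1 - q)"
  by (auto simp: sum_gp divide_right_mono)

lemma pow2_powr: "((2::real)^n) powr s = (2 powr s)^n"
proof -
  have "((2::real)^n) powr s = (2 powr (real n)) powr s" by (simp add: powr_realpow)
  also have "\<dots> = 2 powr (real n * s)" by (simp add: powr_powr)
  also have "\<dots> = (2 powr s)^n" by (simp add: powr_power)
  finally show ?thesis .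
qed

lemma hm_zero:
  fixes A :: "real set" and F :: "nat \<Rightarrow> real set"
  assumes s: "s > 0" and r: "r > 0" and K: "K \<ge> 0" and lam: "0 < lam" "lam < 2 powr s"
    and fin: "\<And>n. finite (F n)" and cardF: "\<And>n. real (card (F n)) \<le> K * lam^n"
    and cov: "\<And>x N. x \<in> A \<Longrightarrow> \<exists>n\<ge>N. \<exists>z\<in>F n. \<bar>x - z\<bar> < r / 2^n"
  shows "hausdorff_measure s A = 0"
proof -
  define q where "q = lam / 2 powr s"
  have q: "0 < q" "q < 1" using lam by (auto simp: q_def)
  define K' where "K' = K * (2 * r) powr s"
  have K': "K' \<ge> 0" using K by (simp add: K'_def)
  have pre0: "hausdorff_pre s d A = 0" if d: "d > 0" for d
  proof -
    have "hausdorff_pre s d A \<le> 0"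
    proof (rule ennreal_le_epsilon)
      fix e :: real assume e: "0 < e"
      obtain N1 where N1: "(1/2::real)^N1 < d / (2*r)" using real_arch_pow_inv[of "d/(2*r)" "1/2"] d r by auto
      obtain N2 where N2: "q^N2 < e * (1 - q) / (K' + 1)"
        using real_arch_pow_inv[of "e * (1 - q) / (K' + 1)" q] e q K' by auto
      define N where "N = max N1 N2"
      have qN: "q^N \<le> q^N2" using q by (intro power_decreasing) (auto simp: N_def)
      have hN: "(1/2::real)^N \<le> (1/2)^N1" by (intro power_decreasing) (auto simp: N_def)
      have tail: "K' * (q^N / (1 - q)) \<le> e"
      proof -
        have "K' * q^N \<le> (K' + 1) * q^N" using q by simp
        also have "\<dots> \<le> (K' + 1) * q^N2" using qN K' by (intro mult_left_mono) auto
        also have "\<dots> \<le> e * (1 - q)" using N2 K' by (simp add: field_simps)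
        finally show ?thesis using q by (simp add: field_simps)
      qed
      define L where "L n = sorted_list_of_set (F n)" for n
      have lenL: "length (L n) = card (F n)" for n by (simp add: L_def)
      have setL: "set (L n) = F n" for n by (simp add: L_def fin)
      define h where "h p = (case p of (n, t) \<Rightarrow> if N \<le> n \<and> t < length (L n) then (2 * r / 2^n) powr s else 0)" for p
      define U where "U i = (case prod_decode i of (n, t) \<Rightarrow>
          if N \<le> n \<and> t < length (L n) then ball (L n ! t) (r / 2^n) else {})" for i
      have hnn: "h p \<ge> 0" for p by (auto simp: h_def split: prod.splits)
      have dU: "diameter (U i) powr s = h (prod_decode i)" for i
      proof -
        have "\<not> r / 2^n < 0" for n::nat using r by (simp add: not_less)
        then show ?thesis using r s by (auto simp: U_def h_def split: prod.splits)
      qed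
      have small: "2 * r / 2^n \<le> d" if "N \<le> n" for n
      proof -
        have "(1/2::real)^n \<le> (1/2)^N" using that by (intro power_decreasing) auto
        then have "(1/2::real)^n < d / (2*r)" using hN N1 by linarith
        then show ?thesis using r by (simp add: field_simps power_one_over)
      qed
      have Uc: "U \<in> {U :: nat \<Rightarrow> real set. A \<subseteq> (\<Union>i. U i) \<and> (\<forall>i. bounded (U i) \<and> diameter (U i) \<le> d)}"
      proof (safe)
        fix x assume "x \<in> A"
        then obtain n z where n: "N \<le> n" and z: "z \<in> F n" and xz: "\<bar>x - z\<bar> < r / 2^n" using cov by blast
        obtain t where t: "t < length (L n)" "L n ! t = z" using z setL by (metis in_set_conv_nth)
        have "x \<in> U (prod_encode (n, t))" using n t xz by (simp add: U_def dist_real_def abs_minus_commute)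
        then show "x \<in> (\<Union>i. U i)" by blast
      next
        fix i show "bounded (U i)" by (auto simp: U_def split: prod.splits)
      next
        fix i show "diameter (U i) \<le> d" using small r d
          by (auto simp: U_def split: prod.splits)
      qed
      have "hausdorff_pre s d A \<le> (\<Sum>i. ennreal (diameter (U i) powr s))"
        unfolding hausdorff_pre_def by (rule INF_lower[OF Uc])
      also have "\<dots> \<le> ennreal e"
        unfolding suminf_eq_SUP
      proof (rule SUP_least)
        fix M
        have "(\<Sum>i<M. h (prod_decode i)) = (\<Sum>p\<in>prod_decode ` {..<M}. h p)"
          by (simp add: sum.reindex inj_on_def inj_prod_decode)
        also have "\<dots> \<le> (\<Sum>p\<in>{..M}\<times>{..M}. h p)"
        proof (rule sum_mono2)
          show "prod_decode ` {..<M} \<subseteq> {..M} \<times> {..M}"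
          proof
            fix p assume "p \<in> prod_decode ` {..<M}"
            then obtain i where i: "i < M" "p = prod_decode i" by auto
            obtain a c where p: "p = (a, c)" by force
            have "prod_encode p = i" using i by simp
            then have "a \<le> i" "c \<le> i" using p le_prod_encode_1[of a c] le_prod_encode_2[of c a] by auto
            then show "p \<in> {..M} \<times> {..M}" using i(1) by (simp add: p)
          qed
        qed (auto simp: hnn)
        also have "\<dots> = (\<Sum>n\<in>{..M}. \<Sum>t\<in>{..M}. h (n, t))" by (simp add: sum.cartesian_product)
        also have "\<dots> \<le> (\<Sum>n\<in>{..M}. if N \<le> n then K' * q^n else 0)"
        proof (rule sum_mono)
          fix n assume "n \<in> {..M}"
          show "(\<Sum>t\<in>{..M}. h (n, t)) \<le> (if N \<le> n then K' * q^n else 0)"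
          proof (cases "N \<le> n")
            case False then show ?thesis by (simp add: h_def)
          next
            case True
            define cc where "cc = (2 * r / 2^n) powr s"
            have "(\<Sum>t\<in>{..M}. h (n, t)) = (\<Sum>t\<in>{..M}. if t \<in> {..<length (L n)} then cc else 0)"
              unfolding cc_def h_def using True by simp
            also have "\<dots> = (\<Sum>t\<in>{..M} \<inter> {..<length (L n)}. cc)" by (rule sum.inter_restrict[symmetric]) simp
            also have "\<dots> = real (card ({..M} \<inter> {..<length (L n)})) * cc" by simp
            also have "\<dots> \<le> real (card (F n)) * cc"
            proof -
              have "card ({..M} \<inter> {..<length (L n)}) \<le> card {..<length (L n)}" by (intro card_mono) auto
              then show ?thesis using lenL[of n] by (intro mult_right_mono) (auto simp: cc_def)
            qed
            also have "\<dots> \<le> K * lam^n * cc" using cardF by (intro mult_right_mono) (auto simp: cc_def)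
            also have "\<dots> = K' * q^n"
              using r by (simp add: cc_def K'_def q_def powr_divide pow2_powr power_divide field_simps)
            finally show ?thesis using True by simp
          qed
        qed
        also have "\<dots> = (\<Sum>n\<in>{N..M}. K' * q^n)"
          by (simp add: sum.If_cases) (intro sum.cong, auto)
        also have "\<dots> = K' * (\<Sum>n=N..M. q^n)" by (simp add: sum_distrib_left)
        also have "\<dots> \<le> K' * (q^N / (1 - q))" using q K' by (intro mult_left_mono geo_tail) auto
        also have "\<dots> \<le> e" by (rule tail)
        finally have "(\<Sum>i<M. h (prod_decode i)) \<le> e" .
        then show "(\<Sum>i<M. ennreal (diameter (U i) powr s)) \<le> ennreal e"
          by (simp add: dU hnn ennreal_leI)
      qed
      finally show "hausdorff_pre s d A \<le> 0 + ennreal e" by simp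
    qed
    then show ?thesis by simp
  qed
  show ?thesis unfolding hausdorff_measure_def using pre0 by simp
qed


lemma bad_cover:
  assumes d: "0 < d'" "d' < d" "d \<le> 1/2"
    and b: "\<bar>b\<bar> \<le> 1/2"
    and H: "\<And>m c. 1 \<le> m \<Longrightarrow> \<bar>2^m * b - b - of_int c\<bar> < d \<Longrightarrow> d' + \<bar>2^m * b - b - of_int c\<bar> \<le> 2^m * d'"
    and x: "x \<in> bad_set b d d'"
  shows "\<exists>n\<ge>N. \<exists>k. reach b d n k \<and> \<bar>x - (b + of_int k) / 2^n\<bar> < d' / 2^n"
proof -
  have x01: "0 \<le> x" "x < 1" and om: "frac b \<in> omega_limit x" and ng: "\<And>n. \<not> good_time b d d' x n"
    using x by (auto simp: bad_set_def)
  obtain n where n: "n \<ge> max N 1" and cd: "circ_dist ((dbl ^^ n) x) (frac b) < d'"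
    using om d unfolding omega_limit_def by blast
  obtain k::int where "\<bar>2^n * x - frac b - of_int k\<bar> < d'" using cd cd_dbl_lt by blast
  moreover have "2^n * x - b - of_int (k - floor b) = 2^n * x - frac b - of_int k" by (simp add: frac_def)
  ultimately have kk: "\<bar>2^n * x - b - of_int (k - floor b)\<bar> < d'" by simp
  have "1 \<le> n" using n by simp
  from key[OF d b H x01 ng this kk] obtain k' where rk: "reach b d n k'" and k': "\<bar>2^n * x - b - of_int k'\<bar> < d'"
    by blast
  have "\<bar>x - (b + of_int k') / 2^n\<bar> = \<bar>2^n * x - b - of_int k'\<bar> / 2^n"
    by (simp add: field_simps abs_div_pos[symmetric])
  also have "\<dots> < d' / 2^n" using k' by (simp add: divide_strict_right_mono)
  finally show ?thesis using rk n by auto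
qed

lemma reach_periodic:
  assumes "reach b d n k"
    and ex: "\<And>m. 1 \<le> m \<Longrightarrow> \<bar>2^m * b - b - of_int (round (2^m * b - b))\<bar> < d \<Longrightarrow> 2^m * b - b = of_int (round (2^m * b - b))"
  shows "\<exists>i::int. -1 \<le> i \<and> i \<le> 2 \<and> b + of_int k = 2^n * (b + of_int i)"
  using assms(1)
proof (induction rule: reach.induct)
  case (base i)
  then show ?case by auto
next
  case (step j i m)
  then obtain i0::int where i0: "-1 \<le> i0" "i0 \<le> 2" "b + of_int i = 2^j * (b + of_int i0)" by blast
  have e: "2^m * b - b = of_int (round (2^m * b - b))" using ex step by blast
  have "b + of_int (2^m * i + round (2^m * b - b)) = 2^m * (b + of_int i)"
    using e by (simp add: algebra_simps)
  also have "\<dots> = 2^(j+m) * (b + of_int i0)" using i0 by (simp add: power_add)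
  finally show ?case using i0 by blast
qed

lemma reach_cases_sub:
  assumes "reach b d n k" "n \<ge> 1"
  shows "\<exists>m i. 1 \<le> m \<and> m \<le> n \<and> reach b d (n - m) i \<and> \<bar>2^m * b - b - of_int (round (2^m * b - b))\<bar> < d
           \<and> k = 2^m * i + round (2^m * b - b)"
  using assms by (cases rule: reach.cases) auto

lemma reach_zero: "reach b d 0 k \<Longrightarrow> k \<in> {-1..2}"
  by (cases rule: reach.cases) auto

lemma reach_card:
  assumes lam: "lam > 0" and Mq: "(1/lam)^M \<le> 1 - 1/lam" and lam1: "lam > 1"
    and big: "\<And>m. 1 \<le> m \<Longrightarrow> \<bar>2^m * b - b - of_int (round (2^m * b - b))\<bar> < d \<Longrightarrow> M \<le> m"
  shows "finite {k. reach b d n k} \<and> real (card {k. reach b d n k}) \<le> 4 * lam^n"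
proof (induction n rule: less_induct)
  case (less n)
  define G where "G n = {k. reach b d n k}" for n
  show ?case
  proof (cases "n = 0")
    case True
    have "G 0 \<subseteq> {-1..2}" using reach_zero by (auto simp: G_def)
    moreover have "{-1..2::int} \<subseteq> G 0" by (auto simp: G_def intro: reach.base)
    ultimately have "G 0 = {-1..2}" by blast
    then show ?thesis using True by (simp add: G_def)
  next
    case False
    define f where "f m i = 2^m * i + round (2^m * b - b)" for m :: nat and i :: int
    have sub: "G n \<subseteq> (\<Union>m\<in>{M..n}. f m ` G (n - m))"
    proof
      fix k assume "k \<in> G n"
      then obtain m i where "1 \<le> m" "m \<le> n" "reach b d (n - m) i"
          "\<bar>2^m * b - b - of_int (round (2^m * b - b))\<bar> < d" "k = f m i"
        using reach_cases_sub[of b d n k] False by (auto simp: G_def f_def)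
      then show "k \<in> (\<Union>m\<in>{M..n}. f m ` G (n - m))" using big by (auto simp: G_def)
    qed
    have IH: "finite (G (n - m)) \<and> real (card (G (n - m))) \<le> 4 * lam^(n - m)" if "m \<in> {M..n}" for m
    proof -
      have "M \<ge> 1"
      proof (rule ccontr)
        assume "\<not> M \<ge> 1" then have "M = 0" by simp
        then show False using Mq lam1 by simp
      qed
      then show ?thesis using less.IH[of "n - m"] that False unfolding G_def by auto
    qed
    have finU: "finite (\<Union>m\<in>{M..n}. f m ` G (n - m))" using IH by auto
    have "card (G n) \<le> card (\<Union>m\<in>{M..n}. f m ` G (n - m))" by (rule card_mono[OF finU sub])
    also have "\<dots> \<le> (\<Sum>m\<in>{M..n}. card (f m ` G (n - m)))" by (rule card_UN_le) simp
    also have "\<dots> \<le> (\<Sum>m\<in>{M..n}. card (G (n - m)))" by (intro sum_mono card_image_le) (use IH in auto)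
    finally have c1: "real (card (G n)) \<le> (\<Sum>m\<in>{M..n}. real (card (G (n - m))))"
      by (metis of_nat_le_iff of_nat_sum)
    also have "\<dots> \<le> (\<Sum>m\<in>{M..n}. 4 * lam^(n - m))" by (intro sum_mono) (use IH in auto)
    also have "\<dots> = (\<Sum>m\<in>{M..n}. 4 * lam^n * (1/lam)^m)"
    proof (intro sum.cong refl)
      fix m assume "m \<in> {M..n}"
      then have "lam^n = lam^(n-m) * lam^m" by (simp add: power_add[symmetric])
      then show "4 * lam^(n - m) = 4 * lam^n * (1/lam)^m" using lam by (simp add: power_one_over field_simps)
    qed
    also have "\<dots> = 4 * lam^n * (\<Sum>m=M..n. (1/lam)^m)" by (simp add: sum_distrib_left)
    also have "\<dots> \<le> 4 * lam^n * ((1/lam)^M / (1 - 1/lam))"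
      using lam lam1 by (intro mult_left_mono geo_tail) auto
    also have "\<dots> \<le> 4 * lam^n"
    proof -
      have "(1/lam)^M / (1 - 1/lam) \<le> 1" using Mq lam1 by (simp add: divide_le_eq_1)
      from mult_left_mono[OF this, of "4 * lam^n"] show ?thesis using lam by simp
    qed
    finally have "real (card (G n)) \<le> 4 * lam^n" .
    moreover have "finite (G n)" by (rule finite_subset[OF sub finU])
    ultimately show ?thesis by (simp add: G_def)
  qed
qed


theorem proposition6p5:
  fixes c \<epsilon> C :: real
  assumes "0 \<le> c" and "c < 1" and "\<epsilon> > 0" and "C > 1"
  shows "\<exists>\<delta> \<delta>'. 0 < \<delta>' \<and> \<delta>' < C * \<delta>' \<and> C * \<delta>' < \<delta> \<and> \<delta> < 1/2 \<and>
           hausdorff_dim (bad_set (1/2 - c) \<delta> \<delta>') < ereal \<epsilon>"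
proof -
  define b where "b = 1/2 - c"
  have "-1/2 \<le> b" "b \<le> 1/2" using assms by (auto simp: b_def)
  then have b: "\<bar>b\<bar> \<le> 1/2" by (intro abs_leI) linarith+
  define s where "s = \<epsilon> / 2"
  have s: "s > 0" "s < \<epsilon>" using assms by (auto simp: s_def)
  define lam where "lam = 2 powr (s/2)"
  have lam1: "lam > 1" using s by (simp add: lam_def)
  have lam0: "lam > 0" using lam1 by simp
  have lams: "lam < 2 powr s" using s by (simp add: lam_def)
  have mu: "0 < 1/lam" "1/lam < 1" using lam1 by auto
  obtain M1 where M1: "(1/lam)^M1 < 1 - 1/lam" using real_arch_pow_inv[of "1 - 1/lam" "1/lam"] mu by auto
  obtain M2 where M2: "1 + 2*C < 2^M2" using real_arch_pow[of 2 "1 + 2*C"] by auto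
  define ex where "ex m \<longleftrightarrow> (\<exists>z::int. 2^m * b - b = of_int z)" for m :: nat
  define dd where "dd m = \<bar>2^m * b - b - of_int (round (2^m * b - b))\<bar>" for m :: nat
  have dd0: "dd m = 0 \<longleftrightarrow> ex m" for m
  proof
    assume "dd m = 0" then show "ex m" unfolding dd_def ex_def by auto
  next
    assume "ex m" then obtain z::int where z: "2^m * b - b = of_int z" unfolding ex_def by blast
    then have "round (2^m * b - b) = z" by simp
    then show "dd m = 0" using z by (simp add: dd_def)
  qed
  obtain P::nat where hP: "(\<exists>p\<ge>1. ex p) \<Longrightarrow> 1 \<le> P \<and> ex P" by blast
  define M where "M = max (max M1 M2) (P + 1)"
  have M1M: "(1/lam)^M \<le> 1 - 1/lam"
  proof -
    have "(1/lam)^M \<le> (1/lam)^M1" using mu by (intro power_decreasing) (auto simp: M_def)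
    then show ?thesis using M1 by linarith
  qed
  have M2M: "1 + 2*C \<le> 2^M"
  proof -
    have "(2::real)^M2 \<le> 2^M" by (intro power_increasing) (auto simp: M_def)
    then show ?thesis using M2 by linarith
  qed
  have PM: "P < M" by (simp add: M_def)
  define D where "D = dd ` {m. 1 \<le> m \<and> m < M \<and> dd m > 0}"
  have finD: "finite D" unfolding D_def by simp
  define \<delta> where "\<delta> = Min (insert (1/4) D)"
  have dpos: "\<delta> > 0" unfolding \<delta>_def using finD by (subst Min_gr_iff) (auto simp: D_def)
  have dle: "\<delta> \<le> 1/4" unfolding \<delta>_def using finD by (intro Min_le) auto
  have dD: "\<delta> \<le> dd m" if "1 \<le> m" "m < M" "dd m > 0" for m
    unfolding \<delta>_def using finD that by (intro Min_le) (auto simp: D_def)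
  define \<delta>' where "\<delta>' = \<delta> / (2*C)"
  have d'pos: "\<delta>' > 0" using dpos assms by (simp add: \<delta>'_def)
  have Cd': "C * \<delta>' = \<delta>/2" using assms by (simp add: \<delta>'_def)
  have d'lt: "\<delta>' < \<delta>" using dpos assms by (simp add: \<delta>'_def field_simps)
  have near: "c' = round (2^m * b - b) \<and> (ex m \<or> M \<le> m)"
    if m: "1 \<le> m" and c': "\<bar>2^m * b - b - of_int c'\<bar> < \<delta>" for m c'
  proof -
    have cr: "round (2^m * b - b) = c'" using c' dle by (intro round_unique') auto
    then have "dd m < \<delta>" using c' by (simp add: dd_def)
    have "ex m \<or> M \<le> m"
    proof (cases "M \<le> m")
      case False
      have "\<not> dd m > 0" using dD[OF m] False \<open>dd m < \<delta>\<close> by force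
      moreover have "dd m \<ge> 0" by (simp add: dd_def)
      ultimately have "dd m = 0" by linarith
      then show ?thesis using dd0 by simp
    qed simp
    then show ?thesis using cr by simp
  qed
  have H: "\<delta>' + \<bar>2^m * b - b - of_int c'\<bar> \<le> 2^m * \<delta>'"
    if m: "1 \<le> m" and c': "\<bar>2^m * b - b - of_int c'\<bar> < \<delta>" for m c'
  proof -
    from near[OF m c'] have cr: "c' = round (2^m * b - b)" and exM: "ex m \<or> M \<le> m" by auto
    show ?thesis
    proof (cases "ex m")
      case True
      then have "dd m = 0" using dd0 by simp
      then have "\<bar>2^m * b - b - of_int c'\<bar> = 0" by (simp add: dd_def cr)
      moreover have "\<delta>' \<le> 2^m * \<delta>'" using d'pos by simp
      ultimately show ?thesis by simp
    next
      case False
      then have Mm: "M \<le> m" using exM by simp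
      have "\<delta>' + \<bar>2^m * b - b - of_int c'\<bar> \<le> \<delta>' + \<delta>" using c' by simp
      also have "\<dots> = (1 + 2*C) * \<delta>'" using Cd' by (simp add: algebra_simps)
      also have "\<dots> \<le> 2^M * \<delta>'" using M2M d'pos by (intro mult_right_mono) auto
      also have "\<dots> \<le> 2^m * \<delta>'" using Mm d'pos by (intro mult_right_mono power_increasing) auto
      finally show ?thesis .
    qed
  qed
  define A where "A = bad_set b \<delta> \<delta>'"
  define F where "F n = (\<lambda>k. (b + of_int k) / 2^n) ` {k. reach b \<delta> n k}" for n
  have dhalf: "\<delta> \<le> 1/2" using dle by simp
  have cov: "\<exists>n\<ge>N. \<exists>z\<in>F n. \<bar>x - z\<bar> < \<delta>' / 2^n" if xA: "x \<in> A" for x N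
  proof -
    obtain n k where "n \<ge> N" "reach b \<delta> n k" "\<bar>x - (b + of_int k) / 2^n\<bar> < \<delta>' / 2^n"
      using bad_cover[OF d'pos d'lt dhalf b H, of x N] xA by (auto simp: A_def)
    then show ?thesis by (auto simp: F_def)
  qed
  have Fc: "finite (F n) \<and> real (card (F n)) \<le> 4 * lam^n" for n
  proof (cases "\<exists>p\<ge>1. ex p")
    case True
    then have P: "1 \<le> P" "ex P" using hP by auto
    then obtain zP::int where zP: "2^P * b - b = of_int zP" by (auto simp: ex_def)
    have exqP: "ex (q * P)" for q
    proof (induction q)
      case 0 then show ?case by (auto simp: ex_def intro: exI[of _ 0])
    next
      case (Suc q)
      then obtain z::int where z: "2^(q*P) * b - b = of_int z" by (auto simp: ex_def)
      have "2^(Suc q * P) * b - b = 2^P * (2^(q*P) * b - b) + (2^P * b - b)"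
        by (simp add: power_add algebra_simps)
      also have "\<dots> = of_int (2^P * z + zP)" using z zP by simp
      finally show ?case unfolding ex_def by blast
    qed
    have allex: "2^m * b - b = of_int (round (2^m * b - b))"
      if m: "1 \<le> m" and c': "\<bar>2^m * b - b - of_int (round (2^m * b - b))\<bar> < \<delta>" for m
    proof -
      define r where "r = m mod P"
      define q where "q = m div P"
      have mrq: "m = r + q * P" by (simp add: r_def q_def)
      obtain z::int where z: "2^(q*P) * b - b = of_int z" using exqP[of q] by (auto simp: ex_def)
      have split: "2^m * b - b = 2^r * (2^(q*P) * b - b) + (2^r * b - b)"
        by (simp add: mrq power_add algebra_simps)
      have "ex m"
      proof (cases "r = 0")
        case True
        then show ?thesis using split z by (auto simp: ex_def)
      next
        case False
        have rP: "r < P" using P by (simp add: r_def)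
        have "2^r * b - b - of_int (round (2^m * b - b) - 2^r * z) = 2^m * b - b - of_int (round (2^m * b - b))"
          unfolding split z by simp
        then have "\<bar>2^r * b - b - of_int (round (2^m * b - b) - 2^r * z)\<bar> < \<delta>"
          using c' by simp
        from near[OF _ this] False rP PM have "ex r" by auto
        then obtain w::int where "2^r * b - b = of_int w" by (auto simp: ex_def)
        then show ?thesis using split z by (auto simp: ex_def intro: exI[of _ "2^r * z + w"])
      qed
      then obtain z'::int where "2^m * b - b = of_int z'" by (auto simp: ex_def)
      then show ?thesis by simp
    qed
    have "F n \<subseteq> (\<lambda>i. b + of_int i) ` {-1..2}"
    proof
      fix z assume "z \<in> F n"
      then obtain k where k: "reach b \<delta> n k" "z = (b + of_int k) / 2^n" by (auto simp: F_def)
      obtain i::int where i: "-1 \<le> i" "i \<le> 2" "b + of_int k = 2^n * (b + of_int i)"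
        using reach_periodic[OF k(1) allex] by blast
      then have "z = b + of_int i" using k(2) by simp
      then show "z \<in> (\<lambda>i. b + of_int i) ` {-1..2}" using i by auto
    qed
    moreover have "card ((\<lambda>i. b + of_int i) ` {-1..2::int}) \<le> 4"
      using card_image_le[of "{-1..2::int}" "\<lambda>i. b + of_int i"] by simp
    moreover have "finite ((\<lambda>i. b + of_int i) ` {-1..2::int})" by simp
    ultimately have "finite (F n)" "card (F n) \<le> 4"
      using finite_subset card_mono le_trans by metis+
    moreover have "(1::real) \<le> lam^n" using lam1 by simp
    ultimately show ?thesis by simp
  next
    case False
    have big: "M \<le> m" if "1 \<le> m" "\<bar>2^m * b - b - of_int (round (2^m * b - b))\<bar> < \<delta>" for m
      using near[OF that] False that(1) by auto
    have "finite {k. reach b \<delta> n k} \<and> real (card {k. reach b \<delta> n k}) \<le> 4 * lam^n"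
      by (rule reach_card[OF lam0 M1M lam1 big])
    moreover have "card (F n) \<le> card {k. reach b \<delta> n k}" unfolding F_def by (rule card_image_le) (use calculation in simp)
    ultimately show ?thesis by (auto simp: F_def)
  qed
  have hm: "hausdorff_measure s A = 0"
    by (rule hm_zero[where F=F and K=4 and A=A, OF s(1) d'pos _ lam0 lams]) (use Fc cov in auto)
  have "hausdorff_dim A \<le> ereal s"
    unfolding hausdorff_dim_def using hm s by (intro Inf_lower) auto
  also have "\<dots> < ereal \<epsilon>" using s by simp
  finally have "hausdorff_dim A < ereal \<epsilon>" .
  moreover have "\<delta> < 1/2" using dle by simp
  moreover have "\<delta>' < C * \<delta>'" using assms d'pos by simp
  moreover have "C * \<delta>' < \<delta>" using Cd' dpos by simp
  ultimately show ?thesis using d'pos unfolding A_def b_def by blast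
qed

end
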